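(* Let $p\ge2$ and $n,\ell,t$ be positive integers. Every $t$-tandem-duplication-correcting code $\mathcal{C}\subseteq\mathbb{Z}_p^n$ with respect to duplication length $\ell$ satisfies $$|\mathcal{C}|\le\frac{t!}{(n+(t-1)\ell)^t}\cdot\frac{p^{n+t(\ell+1)}}{(p-1)^t}.$$
   Context: $\mathbb{Z}_p=\{0,1,\dots,p-1\}$ with arithmetic mod $p$. For a word $\mathbf{x}$ over $\mathbb{Z}_p$ and $0\le i\le|\mathbf{x}|-\ell$, write $\mathbf{x}=\mathbf{u}\mathbf{v}\mathbf{w}$ with $|\mathbf{u}|=i$, $|\mathbf{v}|=\ell$; the tandem duplication of length $\ell$ at position $i$ produces $\mathbf{u}\mathbf{v}\mathbf{v}\mathbf{w}$. The ball $B_t^{\tau_\ell}(\mathbf{x})$ is the set of words obtainable from $\mathbf{x}$ by at most $t$ successive tandem duplications of length $\ell$. A code $\mathcal{C}\subseteq\mathbb{Z}_p^n$ is $t$-tandem-duplication-correcting (duplication length $\ell$) if $B_t^{\tau_\ell}(\mathbf{c})\cap B_t^{\tau_\ell}(\mathbf{c}')=\emptyset$ for all distinct $\mathbf{c},\mathbf{c}'\in\mathcal{C}$. *)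

theory Defs
  imports Complex_Main
begin

definition words :: "nat \<Rightarrow> nat \<Rightarrow> nat list set" where
  "words p n = {x. length x = n \<and> (\<forall>a\<in>set x. a < p)}"

text \<open>Tandem duplication of length l at position i: x = u v w with |u| = i, |v| = l,
  result u v v w. Only defined (used) when i + l \<le> length x.\<close>
definition tdup :: "nat \<Rightarrow> nat \<Rightarrow> 'a list \<Rightarrow> 'a list" where
  "tdup l i x = take i x @ take l (drop i x) @ take l (drop i x) @ drop (i + l) x"

definition tdup_step :: "nat \<Rightarrow> 'a list \<Rightarrow> 'a list \<Rightarrow> bool" where
  "tdup_step l x y \<longleftrightarrow> (\<exists>i. i + l \<le> length x \<and> y = tdup l i x)"

definition tdup_ball :: "nat \<Rightarrow> nat \<Rightarrow> 'a list \<Rightarrow> 'a list set" where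
  "tdup_ball l t x = {y. \<exists>k\<le>t. ((tdup_step l) ^^ k) x y}"

definition tdc_code :: "nat \<Rightarrow> nat \<Rightarrow> nat \<Rightarrow> nat \<Rightarrow> nat list set \<Rightarrow> bool" where
  "tdc_code p n l t C \<longleftrightarrow> C \<subseteq> words p n \<and>
     (\<forall>c\<in>C. \<forall>c'\<in>C. c \<noteq> c' \<longrightarrow> tdup_ball l t c \<inter> tdup_ball l t c' = {})"

end

theory Submission
  imports Defs
begin

definition sb :: "nat \<Rightarrow> nat \<Rightarrow> nat \<Rightarrow> nat" where "sb p a b = (a + p - b) mod p"
definition dif :: "nat \<Rightarrow> nat \<Rightarrow> nat list \<Rightarrow> nat list" where
  "dif p l x = map (\<lambda>j. sb p (x!(j+l)) (x!j)) [0..<length x - l]"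
definition nz :: "nat list \<Rightarrow> nat" where "nz d = length (filter (\<lambda>a. a \<noteq> 0) d)"
definition ins :: "nat \<Rightarrow> nat \<Rightarrow> nat list \<Rightarrow> nat list" where
  "ins l i d = take i d @ replicate l 0 @ drop i d"
definition rstep :: "nat \<Rightarrow> nat list \<Rightarrow> nat list \<Rightarrow> bool" where
  "rstep l d e \<longleftrightarrow> (\<exists>i \<le> length d. e = ins l i d)"

lemma length_tdup: "i + l \<le> length x \<Longrightarrow> length (tdup l i x) = length x + l"
  by (simp add: tdup_def)

lemma tdup_nth: "i + l \<le> length x \<Longrightarrow> k < length x + l \<Longrightarrow>
   tdup l i x ! k = (if k < i + l then x ! k else x ! (k - l))"
  unfolding tdup_def
  apply (auto simp: nth_append min_def)
  apply (rule arg_cong[where f="(!) x"]) by linarith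

lemma set_tdup: "set (tdup l i x) \<subseteq> set x"
  unfolding tdup_def by (auto dest: in_set_takeD in_set_dropD)

lemma dif_tdup: assumes "i + l \<le> length x"
  shows "dif p l (tdup l i x) = ins l i (dif p l x)"
proof (rule nth_equalityI)
  show "length (dif p l (tdup l i x)) = length (ins l i (dif p l x))"
    using assms by (simp add: dif_def ins_def length_tdup)
next
  fix j assume j: "j < length (dif p l (tdup l i x))"
  hence jl: "j < length x" using assms by (simp add: dif_def length_tdup)
  have L: "dif p l (tdup l i x) ! j = sb p (tdup l i x ! (j+l)) (tdup l i x ! j)"
    using j by (simp add: dif_def)
  show "dif p l (tdup l i x) ! j = ins l i (dif p l x) ! j"
  proof (cases "j < i")
    case True
    then show ?thesis using L assms jl
      by (simp add: tdup_nth ins_def nth_append dif_def)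
  next
    case False
    show ?thesis
    proof (cases "j < i + l")
      case True
      then show ?thesis using L assms jl False
        by (auto simp add: tdup_nth ins_def nth_append dif_def sb_def)
    next
      case False2: False
      have a: "l \<le> j" "j - l < length x - l" using False2 jl by auto
      have b: "j - l + l = j" using a by simp
      show ?thesis using L assms jl False False2 a b
        by (simp add: tdup_nth ins_def nth_append dif_def sb_def)
    qed
  qed
qed

lemma nz_ins: "nz (ins l i d) = nz d"
proof -
  have "length (filter (\<lambda>a. a \<noteq> 0) (take i d)) + length (filter (\<lambda>a. a \<noteq> 0) (drop i d))
     = length (filter (\<lambda>a. a \<noteq> 0) d)"
    by (metis append_take_drop_id filter_append length_append)
  thus ?thesis unfolding nz_def ins_def by simp
qed


lemma pow_trans: "(R ^^ m) x y \<Longrightarrow> (R ^^ n) y z \<Longrightarrow> (R ^^ (m + n)) x z"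
  by (induction n arbitrary: z) (auto elim!: relpowp_Suc_E intro: relpowp_Suc_I)

lemma pow_tdup_len: "(tdup_step l ^^ k) x y \<Longrightarrow> length y = length x + k * l"
proof (induction k arbitrary: y)
  case 0 then show ?case by simp
next
  case (Suc k)
  from Suc.prems(1) obtain y' where a: "(tdup_step l ^^ k) x y'" "tdup_step l y' y"
    by (rule relpowp_Suc_E)
  then show ?case using Suc.IH[OF a(1)] by (auto simp: tdup_step_def length_tdup)
qed

lemma pow_tdup_words: "(tdup_step l ^^ k) x y \<Longrightarrow> x \<in> words p m \<Longrightarrow> y \<in> words p (m + k * l)"
proof (induction k arbitrary: y)
  case 0 then show ?case by simp
next
  case (Suc k)
  from Suc.prems(1) obtain y' where a: "(tdup_step l ^^ k) x y'" "tdup_step l y' y"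
    by (rule relpowp_Suc_E)
  then show ?case using Suc.IH[OF a(1) Suc.prems(2)] set_tdup
    by (fastforce simp: tdup_step_def length_tdup words_def)
qed

lemma pow_tdup_nz: "(tdup_step l ^^ k) x y \<Longrightarrow> nz (dif p l y) = nz (dif p l x)"
proof (induction k arbitrary: y)
  case 0 then show ?case by simp
next
  case (Suc k)
  from Suc.prems(1) obtain y' where a: "(tdup_step l ^^ k) x y'" "tdup_step l y' y"
    by (rule relpowp_Suc_E)
  then show ?case using Suc.IH[OF a(1)] by (auto simp: tdup_step_def dif_tdup nz_ins)
qed

lemma lift: "(rstep l ^^ k) (dif p l x) e \<Longrightarrow> l \<le> length x \<Longrightarrow>
   \<exists>y. (tdup_step l ^^ k) x y \<and> dif p l y = e"
proof (induction k arbitrary: e)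
  case 0 then show ?case by auto
next
  case (Suc k)
  from Suc.prems(1) obtain e' where a: "(rstep l ^^ k) (dif p l x) e'" "rstep l e' e"
    by (rule relpowp_Suc_E)
  obtain y' where y': "(tdup_step l ^^ k) x y'" "dif p l y' = e'" using Suc.IH[OF a(1) Suc.prems(2)] by blast
  have ly: "length y' = length x + k * l" using pow_tdup_len[OF y'(1)] .
  obtain i where i: "i \<le> length e'" "e = ins l i e'" using a(2) rstep_def by blast
  have il: "i + l \<le> length y'" using i(1) y'(2) ly Suc.prems(2) by (auto simp: dif_def)
  have "tdup_step l y' (tdup l i y')" using il by (auto simp: tdup_step_def)
  moreover have "dif p l (tdup l i y') = e" using dif_tdup[OF il] y'(2) i(2) by simp
  ultimately show ?case using y'(1) by (blast intro: relpowp_Suc_I)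
qed

lemma rs_len: "(rstep l ^^ k) d e \<Longrightarrow> length e = length d + k * l \<and> set e \<subseteq> insert 0 (set d)"
proof (induction k arbitrary: e)
  case 0 then show ?case by auto
next
  case (Suc k)
  from Suc.prems(1) obtain e' where a: "(rstep l ^^ k) d e'" "rstep l e' e"
    by (rule relpowp_Suc_E)
  then show ?case using Suc.IH[OF a(1)] set_take_subset[of _ e'] set_drop_subset[of _ e']
    by (auto simp: rstep_def ins_def) blast+
qed

lemma rs_fin: "finite {e. (rstep l ^^ k) d e}"
proof -
  have "{e. (rstep l ^^ k) d e} \<subseteq> {e. set e \<subseteq> insert 0 (set d) \<and> length e = length d + k * l}"
    using rs_len by blast
  moreover have "finite {e. set e \<subseteq> insert 0 (set d) \<and> length e = length d + k * l}"
    by (rule finite_lists_length_eq) simp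
  ultimately show ?thesis by (rule finite_subset)
qed

lemma rs_cons: "(rstep l ^^ k) d e \<Longrightarrow> (rstep l ^^ k) (a # d) (a # e)"
proof (induction k arbitrary: e)
  case 0 then show ?case by auto
next
  case (Suc k)
  from Suc.prems(1) obtain e' where a: "(rstep l ^^ k) d e'" "rstep l e' e"
    by (rule relpowp_Suc_E)
  obtain i where i: "i \<le> length e'" "e = ins l i e'" using a(2) rstep_def by blast
  have "rstep l (a # e') (a # e)" unfolding rstep_def
    by (rule exI[of _ "Suc i"]) (use i in \<open>auto simp: ins_def\<close>)
  then show ?case using Suc.IH[OF a(1)] by (blast intro: relpowp_Suc_I)
qed

lemma rs_zero: "(rstep l ^^ s) d (replicate (s * l) 0 @ d)"
proof (induction s)
  case 0 then show ?case by auto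
next
  case (Suc s)
  have "rstep l (replicate (s * l) 0 @ d) (replicate (Suc s * l) 0 @ d)" unfolding rstep_def
    by (rule exI[of _ 0]) (auto simp: ins_def replicate_add[symmetric] add.commute)
  then show ?case using Suc.IH by (blast intro: relpowp_Suc_I)
qed


lemma core: assumes "l > 0" shows "(nz d + t) choose t \<le> card {e. (rstep l ^^ t) d e}"
proof (induction d arbitrary: t)
  case Nil
  have "replicate (t * l) 0 @ [] \<in> {e. (rstep l ^^ t) [] e}" using rs_zero by blast
  hence "card {e. (rstep l ^^ t) [] e} \<ge> 1" using rs_fin
    by (metis One_nat_def Suc_leI card_gt_0_iff empty_iff)
  then show ?case by (simp add: nz_def)
next
  case (Cons a d)
  show ?case
  proof (cases "a = 0")
    case True
    have sub: "Cons 0 ` {e. (rstep l ^^ t) d e} \<subseteq> {e. (rstep l ^^ t) (a # d) e}"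
      using rs_cons True by blast
    have "card (Cons 0 ` {e. (rstep l ^^ t) d e}) = card {e. (rstep l ^^ t) d e}"
      by (rule card_image) (simp add: inj_on_def)
    hence "card {e. (rstep l ^^ t) d e} \<le> card {e. (rstep l ^^ t) (a # d) e}"
      using card_mono[OF rs_fin sub] by simp
    moreover have "nz (a # d) = nz d" using True by (simp add: nz_def)
    ultimately show ?thesis using Cons.IH[of t] by simp
  next
    case False
    define A where "A s = (\<lambda>e. replicate (s * l) 0 @ a # e) ` {e. (rstep l ^^ (t - s)) d e}" for s
    have sub: "(\<Union>s\<in>{..t}. A s) \<subseteq> {e. (rstep l ^^ t) (a # d) e}"
    proof
      fix x assume "x \<in> (\<Union>s\<in>{..t}. A s)"
      then obtain s e where s: "s \<le> t" "(rstep l ^^ (t - s)) d e" "x = replicate (s * l) 0 @ a # e"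
        unfolding A_def by blast
      have "(rstep l ^^ (t - s + s)) (a # d) x"
        using pow_trans[OF rs_cons[OF s(2)] rs_zero] s(3) by simp
      thus "x \<in> {e. (rstep l ^^ t) (a # d) e}" using s(1) by simp
    qed
    have fin: "\<forall>s\<in>{..t}. finite (A s)" unfolding A_def using rs_fin by blast
    have disj: "\<forall>s\<in>{..t}. \<forall>s'\<in>{..t}. s \<noteq> s' \<longrightarrow> A s \<inter> A s' = {}"
    proof (intro ballI impI)
      fix s s' :: nat assume "s \<in> {..t}" "s' \<in> {..t}" and ss: "s \<noteq> s'"
      show "A s \<inter> A s' = {}"
      proof (rule ccontr)
        assume "A s \<inter> A s' \<noteq> {}"
        then obtain e e' where ee: "replicate (s * l) 0 @ a # e = replicate (s' * l) 0 @ a # e'"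
          unfolding A_def by blast
        have "s * l \<noteq> s' * l" using ss assms by simp
        then consider "s * l < s' * l" | "s' * l < s * l" by linarith
        then show False
        proof cases
          case 1
          have "(replicate (s * l) 0 @ a # e) ! (s * l) = a" by (simp add: nth_append)
          moreover have "(replicate (s' * l) 0 @ a # e') ! (s * l) = 0" using 1 by (simp add: nth_append)
          ultimately show False using ee False by simp
        next
          case 2
          have "(replicate (s' * l) 0 @ a # e') ! (s' * l) = a" by (simp add: nth_append)
          moreover have "(replicate (s * l) 0 @ a # e) ! (s' * l) = 0" using 2 by (simp add: nth_append)
          ultimately show False using ee False by simp
        qed
      qed
    qed
    have cA: "card (A s) = card {e. (rstep l ^^ (t - s)) d e}" for s
      unfolding A_def by (rule card_image) (simp add: inj_on_def)
    have "(\<Sum>s\<le>t. (nz d + (t - s)) choose (t - s)) \<le> (\<Sum>s\<le>t. card (A s))"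
      by (rule sum_mono) (simp only: cA Cons.IH)
    also have "\<dots> = card (\<Union>s\<in>{..t}. A s)" using card_UN_disjoint[OF _ fin disj] by simp
    also have "\<dots> \<le> card {e. (rstep l ^^ t) (a # d) e}" by (rule card_mono[OF rs_fin sub])
    finally have 1: "(\<Sum>s\<le>t. (nz d + (t - s)) choose (t - s)) \<le> card {e. (rstep l ^^ t) (a # d) e}" .
    have "(\<Sum>s\<le>t. (nz d + (t - s)) choose (t - s)) = (\<Sum>s\<le>t. (nz d + s) choose s)"
      by (rule sum.reindex_bij_witness[of _ "\<lambda>s. t - s" "\<lambda>s. t - s"]) auto
    also have "\<dots> = Suc (nz d + t) choose t" by (rule sum_choose_lower)
    finally show ?thesis using 1 False by (simp add: nz_def)
  qed
qed


lemma sb_eq: assumes "a < p" "c < p" shows "sb p a c = (if c \<le> a then a - c else a + p - c)"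
proof (cases "c \<le> a")
  case True
  have "a + p - c = (a - c) + p" using True by simp
  hence "(a + p - c) mod p = (a - c) mod p" by simp
  then show ?thesis using True assms by (simp add: sb_def)
next
  case False
  then show ?thesis using assms by (simp add: sb_def)
qed

lemma sb_inj: "a < p \<Longrightarrow> b < p \<Longrightarrow> c < p \<Longrightarrow> sb p a c = sb p b c \<Longrightarrow> a = b"
  by (simp add: sb_eq split: if_splits)

lemma dif_inj: assumes "l > 0" "y \<in> words p N" "y' \<in> words p N" "take l y = take l y'" "dif p l y = dif p l y'"
  shows "y = y'"
proof -
  have Ly: "length y = N" "length y' = N" using assms by (auto simp: words_def)
  have "\<forall>k. k < N \<longrightarrow> y ! k = y' ! k"
  proof (rule allI, induct_tac k rule: less_induct, intro impI)
    fix k assume IH: "\<And>j. j < k \<Longrightarrow> j < N \<longrightarrow> y ! j = y' ! j" and k: "k < N"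
    show "y ! k = y' ! k"
    proof (cases "k < l")
      case True
      then show ?thesis using assms(4) by (metis nth_take)
    next
      case False
      define j where "j = k - l"
      have j: "j < length y - l" "j + l = k" using False k Ly j_def by auto
      have "dif p l y ! j = sb p (y ! k) (y ! (k - l))" using j by (simp add: dif_def j_def)
      moreover have "dif p l y' ! j = sb p (y' ! k) (y' ! (k - l))" using j Ly by (simp add: dif_def j_def)
      ultimately have e: "sb p (y ! k) (y ! (k - l)) = sb p (y' ! k) (y' ! (k - l))" using assms(5) by simp
      have "y ! (k - l) = y' ! (k - l)" using IH[of "k - l"] False k assms(1) by simp
      moreover have "y ! k < p" "y' ! k < p" "y ! (k - l) < p" using assms(2,3) k Ly
        by (auto simp: words_def)
      ultimately show ?thesis using e sb_inj by metis
    qed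
  qed
  thus ?thesis using Ly by (simp add: nth_equalityI)
qed

definition Sset :: "nat \<Rightarrow> nat \<Rightarrow> nat \<Rightarrow> nat list set" where
  "Sset p M w = {d. d \<in> words p M \<and> nz d = w}"

lemma words_fin: "finite (words p M)"
proof -
  have "words p M = {xs. set xs \<subseteq> {..<p} \<and> length xs = M}" by (auto simp: words_def)
  thus ?thesis by (simp add: finite_lists_length_eq)
qed

lemma card_words: "card (words p M) = p ^ M"
proof -
  have "words p M = {xs. set xs \<subseteq> {..<p} \<and> length xs = M}" by (auto simp: words_def)
  thus ?thesis by (simp add: card_lists_length_eq)
qed

lemma card_Sset: assumes p: "p > 0" shows "card (Sset p M w) = (M choose w) * (p - 1) ^ w"
proof (induction M arbitrary: w)
  case 0
  have "Sset p 0 w = (if w = 0 then {[]} else {})" by (auto simp: Sset_def words_def nz_def)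
  then show ?case by simp
next
  case (Suc M)
  have fin: "finite (Sset p M w)" for w using words_fin[of p M] by (simp add: Sset_def)
  show ?case
  proof (cases w)
    case 0
    have "Sset p (Suc M) 0 = Cons 0 ` Sset p M 0"
    proof (rule set_eqI, rule iffI)
      fix x assume "x \<in> Sset p (Suc M) 0"
      then have "x = 0 # tl x" "tl x \<in> Sset p M 0"
        by (cases x; auto simp: Sset_def words_def nz_def split: if_splits)+
      thus "x \<in> Cons 0 ` Sset p M 0" by blast
    next
      fix x assume "x \<in> Cons 0 ` Sset p M 0"
      thus "x \<in> Sset p (Suc M) 0" using p by (auto simp: Sset_def words_def nz_def)
    qed
    moreover have "card (Cons 0 ` Sset p M 0) = card (Sset p M 0)" by (simp add: card_image)
    ultimately show ?thesis using Suc.IH[of 0] 0 by simp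
  next
    case (Suc w')
    have eq: "Sset p (Suc M) w = Cons 0 ` Sset p M w \<union> (\<lambda>(a, d). a # d) ` ({1..<p} \<times> Sset p M w')"
    proof (rule set_eqI, rule iffI)
      fix x assume x: "x \<in> Sset p (Suc M) w"
      then obtain a d where ad: "x = a # d" by (cases x) (auto simp: Sset_def words_def)
      show "x \<in> Cons 0 ` Sset p M w \<union> (\<lambda>(a, d). a # d) ` ({1..<p} \<times> Sset p M w')"
      proof (cases "a = 0")
        case True
        then show ?thesis using x ad by (auto simp: Sset_def words_def nz_def)
      next
        case False
        have "(a, d) \<in> {1..<p} \<times> Sset p M w'" using x ad False Suc by (auto simp: Sset_def words_def nz_def)
        then show ?thesis using ad by force
      qed
    next
      fix x assume "x \<in> Cons 0 ` Sset p M w \<union> (\<lambda>(a, d). a # d) ` ({1..<p} \<times> Sset p M w')"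
      thus "x \<in> Sset p (Suc M) w" using Suc p by (auto simp: Sset_def words_def nz_def)
    qed
    have disj: "Cons 0 ` Sset p M w \<inter> (\<lambda>(a, d). a # d) ` ({1..<p} \<times> Sset p M w') = {}" by auto
    have c1: "card (Cons 0 ` Sset p M w) = card (Sset p M w)" by (simp add: card_image)
    have c2: "card ((\<lambda>(a, d). a # d) ` ({1..<p} \<times> Sset p M w')) = (p - 1) * card (Sset p M w')"
      by (subst card_image) (auto simp: inj_on_def card_cartesian_product)
    have "card (Sset p (Suc M) w) = card (Sset p M w) + (p - 1) * card (Sset p M w')"
      unfolding eq by (subst card_Un_disjoint) (use fin disj c1 c2 in auto)
    moreover obtain q where q: "p - 1 = q" by blast
    ultimately show ?thesis using Suc.IH[of w] Suc.IH[of w'] Suc unfolding q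
      by (simp add: algebra_simps)
  qed
qed


lemma binom_sum: "(\<Sum>k\<le>m. (m choose k) * q ^ k) = (q + 1 :: nat) ^ m"
  using binomial_ring[of q 1 m] by simp

lemma fact_pow: "(M::nat) ^ t * fact M \<le> fact (M + t)"
proof (induction t)
  case 0 then show ?case by simp
next
  case (Suc t)
  have "M ^ Suc t * fact M = M * (M ^ t * fact M)" by simp
  also have "\<dots> \<le> (M + Suc t) * fact (M + t)" using Suc by (intro mult_mono) auto
  also have "\<dots> = fact (M + Suc t)" by (simp add: fact_Suc[of "M + t"] del: fact_Suc)
  finally show ?case .
qed

lemma pow_le_choose: "(M::nat) ^ t \<le> fact t * ((M + t) choose t)"
proof -
  have "fact t * fact M * ((M + t) choose t) = (fact (M + t) :: nat)"
    using binomial_fact_lemma[of t "M + t"] by simp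
  hence "M ^ t * fact M \<le> fact t * ((M + t) choose t) * fact M"
    using fact_pow[of M t] by (simp add: mult_ac)
  thus ?thesis by simp
qed

lemma choose_single: "((m choose k) * q ^ k) \<le> (q + 1 :: nat) ^ m" if "k \<le> m"
proof -
  have "((m choose k) * q ^ k) \<le> (\<Sum>k\<le>m. (m choose k) * q ^ k)"
    by (rule member_le_sum) (use that in auto)
  thus ?thesis by (simp add: binom_sum)
qed


lemma per_weight:
  assumes p: "p \<ge> 2" and l: "l > 0" and nl: "l \<le> n" and C: "tdc_code p n l t C"
  shows "card {c\<in>C. nz (dif p l c) = w} * ((w + t) choose t)
         \<le> p ^ l * (((n + t * l - l) choose w) * (p - 1) ^ w)"
proof -
  define N where "N = n + t * l"
  define Cw where "Cw = {c\<in>C. nz (dif p l c) = w}"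
  define T where "T c = {y. (tdup_step l ^^ t) c y}" for c :: "nat list"
  define Y where "Y = {y\<in>words p N. nz (dif p l y) = w}"
  have Cwords: "C \<subseteq> words p n" using C by (simp add: tdc_code_def)
  have finC: "finite C" using Cwords words_fin finite_subset by blast
  have finCw: "finite Cw" unfolding Cw_def using finC by simp
  have TY: "T c \<subseteq> Y" if "c \<in> Cw" for c
  proof
    fix y assume "y \<in> T c"
    hence y: "(tdup_step l ^^ t) c y" by (simp add: T_def)
    have "c \<in> words p n" "nz (dif p l c) = w" using that Cwords by (auto simp: Cw_def)
    thus "y \<in> Y" using pow_tdup_words[OF y] pow_tdup_nz[OF y] by (simp add: Y_def N_def)
  qed
  have finY: "finite Y" unfolding Y_def using words_fin by simp
  have finT: "finite (T c)" if "c \<in> Cw" for c using TY[OF that] finY finite_subset by blast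
  have cardT: "(w + t) choose t \<le> card (T c)" if c: "c \<in> Cw" for c
  proof -
    have lc: "l \<le> length c" using c Cwords nl by (auto simp: Cw_def words_def)
    have w: "nz (dif p l c) = w" using c by (simp add: Cw_def)
    have "{e. (rstep l ^^ t) (dif p l c) e} \<subseteq> dif p l ` T c"
      using lift[OF _ lc] unfolding T_def by blast
    hence "card {e. (rstep l ^^ t) (dif p l c) e} \<le> card (dif p l ` T c)"
      using finT[OF c] by (intro card_mono) auto
    also have "\<dots> \<le> card (T c)" using finT[OF c] by (rule card_image_le)
    finally show ?thesis using core[OF l, of "dif p l c" t] w by simp
  qed
  have disj: "\<forall>c\<in>Cw. \<forall>c'\<in>Cw. c \<noteq> c' \<longrightarrow> T c \<inter> T c' = {}"
  proof (intro ballI impI)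
    fix c c' assume "c \<in> Cw" "c' \<in> Cw" "c \<noteq> c'"
    hence "tdup_ball l t c \<inter> tdup_ball l t c' = {}" using C by (auto simp: tdc_code_def Cw_def)
    moreover have "T c \<subseteq> tdup_ball l t c" "T c' \<subseteq> tdup_ball l t c'"
      by (auto simp: T_def tdup_ball_def)
    ultimately show "T c \<inter> T c' = {}" by blast
  qed
  have "card Cw * ((w + t) choose t) = (\<Sum>c\<in>Cw. (w + t) choose t)" by simp
  also have "\<dots> \<le> (\<Sum>c\<in>Cw. card (T c))" by (rule sum_mono) (rule cardT)
  also have "\<dots> = card (\<Union>c\<in>Cw. T c)" using card_UN_disjoint[OF finCw _ disj] finT by simp
  also have "\<dots> \<le> card Y" using TY finY by (intro card_mono) auto
  also have "\<dots> \<le> card (words p l \<times> Sset p (N - l) w)"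
  proof (rule card_inj_on_le)
    show "inj_on (\<lambda>y. (take l y, dif p l y)) Y"
      unfolding Y_def using dif_inj[OF l] by (auto simp: inj_on_def)
    show "(\<lambda>y. (take l y, dif p l y)) ` Y \<subseteq> words p l \<times> Sset p (N - l) w"
    proof
      fix z assume "z \<in> (\<lambda>y. (take l y, dif p l y)) ` Y"
      then obtain y where y: "y \<in> Y" "z = (take l y, dif p l y)" by blast
      have ly: "length y = N" "\<forall>a\<in>set y. a < p" using y(1) by (auto simp: Y_def words_def)
      have "l \<le> N" using nl by (simp add: N_def)
      hence "take l y \<in> words p l" using ly by (auto simp: words_def dest: in_set_takeD)
      moreover have "dif p l y \<in> words p (N - l)" using ly p by (auto simp: words_def dif_def sb_def)
      ultimately show "z \<in> words p l \<times> Sset p (N - l) w" using y by (auto simp: Sset_def Y_def)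
    qed
    show "finite (words p l \<times> Sset p (N - l) w)"
      using words_fin by (auto simp: Sset_def)
  qed
  also have "\<dots> = p ^ l * (((N - l) choose w) * (p - 1) ^ w)"
    using p by (simp add: card_cartesian_product card_words card_Sset)
  finally show ?thesis by (simp add: Cw_def N_def)
qed


lemma main_nat:
  assumes p: "p \<ge> 2" and l: "l > 0" and C: "tdc_code p n l t C"
  shows "card C * (((n + t * l - l) + t) choose t) * (p - 1) ^ t \<le> p ^ l * p ^ ((n + t * l - l) + t)"
proof -
  define M where "M = n + t * l - l"
  define q where "q = p - 1"
  have pq: "p = q + 1" using p by (simp add: q_def)
  have Cwords: "C \<subseteq> words p n" using C by (simp add: tdc_code_def)
  have finC: "finite C" using Cwords words_fin finite_subset by blast
  show ?thesis
  proof (cases "l \<le> n")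
    case False
    have "card C \<le> card (words p n)" using Cwords words_fin by (rule card_mono[rotated])
    also have "\<dots> = p ^ n" by (rule card_words)
    also have "\<dots> \<le> p ^ l" using False p by (intro power_increasing) auto
    finally have 1: "card C \<le> p ^ l" .
    have 2: "((M + t) choose t) * q ^ t \<le> p ^ (M + t)" unfolding pq by (rule choose_single) simp
    have "card C * (((M + t) choose t) * q ^ t) \<le> p ^ l * p ^ (M + t)" using mult_le_mono[OF 1 2] by simp
    thus ?thesis by (simp add: M_def q_def mult_ac)
  next
    case True
    define Cw where "Cw w = {c\<in>C. nz (dif p l c) = w}" for w
    have step: "card (Cw w) * ((M + t) choose t) * q ^ t \<le> p ^ l * (((M + t) choose (w + t)) * q ^ (w + t))"
      if w: "w \<le> M" for w
    proof -
      have a: "card (Cw w) * ((w + t) choose t) \<le> p ^ l * ((M choose w) * q ^ w)"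
        using per_weight[OF p l True C, of w] by (simp add: Cw_def M_def q_def)
      have cm: "((M + t) choose (w + t)) * ((w + t) choose t) = ((M + t) choose t) * (M choose w)"
        using choose_mult[of t "w + t" "M + t"] w by simp
      have "card (Cw w) * ((M + t) choose t) * ((w + t) choose t)
          = card (Cw w) * ((w + t) choose t) * ((M + t) choose t)" by (simp add: mult_ac)
      also have "\<dots> \<le> p ^ l * ((M choose w) * q ^ w) * ((M + t) choose t)" using a by simp
      also have "\<dots> = p ^ l * q ^ w * ((M + t) choose (w + t)) * ((w + t) choose t)"
        using cm by (simp add: mult_ac)
      finally have "card (Cw w) * ((M + t) choose t) \<le> p ^ l * q ^ w * ((M + t) choose (w + t))"
        by (simp del: mult_le_cancel2 add: mult_le_cancel2[symmetric])
      hence "card (Cw w) * ((M + t) choose t) * q ^ t \<le> p ^ l * q ^ w * ((M + t) choose (w + t)) * q ^ t"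
        by simp
      thus ?thesis by (simp add: power_add mult_ac)
    qed
    have Cun: "C = (\<Union>w\<in>{..M}. Cw w)"
    proof -
      have "nz (dif p l c) \<le> M" if "c \<in> C" for c
      proof -
        have "nz (dif p l c) \<le> length (dif p l c)" by (simp add: nz_def)
        also have "\<dots> \<le> M" using that Cwords by (auto simp: dif_def words_def M_def)
        finally show ?thesis .
      qed
      thus ?thesis by (auto simp: Cw_def)
    qed
    have "card C = (\<Sum>w\<le>M. card (Cw w))"
      unfolding Cun by (rule card_UN_disjoint) (use finC in \<open>auto simp: Cw_def\<close>)
    hence "card C * ((M + t) choose t) * q ^ t = (\<Sum>w\<le>M. card (Cw w) * ((M + t) choose t) * q ^ t)"
      by (simp add: sum_distrib_right)
    also have "\<dots> \<le> (\<Sum>w\<le>M. p ^ l * (((M + t) choose (w + t)) * q ^ (w + t)))"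
      by (rule sum_mono) (rule step, simp)
    also have "\<dots> = p ^ l * (\<Sum>w\<le>M. ((M + t) choose (w + t)) * q ^ (w + t))"
      by (simp add: sum_distrib_left)
    also have "(\<Sum>w\<le>M. ((M + t) choose (w + t)) * q ^ (w + t))
             = (\<Sum>j\<in>(\<lambda>w. w + t) ` {..M}. ((M + t) choose j) * q ^ j)"
      by (subst sum.reindex) (auto simp: inj_on_def)
    also have "\<dots> \<le> (\<Sum>j\<le>M + t. ((M + t) choose j) * q ^ j)"
      by (rule sum_mono2) auto
    also have "\<dots> = p ^ (M + t)" unfolding pq by (rule binom_sum)
    finally show ?thesis by (simp add: M_def q_def)
  qed
qed


theorem lemma1:
  fixes p n l t :: nat and C :: "nat list set"
  assumes "p \<ge> 2" and "n > 0" and "l > 0" and "t > 0"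
    and "tdc_code p n l t C"
  shows "real (card C) \<le> fact t / (real (n + (t - 1) * l)) ^ t
           * (real p ^ (n + t * (l + 1)) / (real p - 1) ^ t)"
proof -
  define M where "M = n + (t - 1) * l"
  define q where "q = p - 1"
  have M2: "n + t * l - l = M" using assms(4) by (cases t) (auto simp: M_def)
  have e: "l + (M + t) = n + t * (l + 1)" using assms(4) by (cases t) (auto simp: M_def algebra_simps)
  have mn: "card C * ((M + t) choose t) * q ^ t \<le> p ^ l * p ^ (M + t)"
    using main_nat[OF assms(1,3,5)] by (simp add: M2 q_def)
  have "card C * M ^ t * q ^ t \<le> card C * (fact t * ((M + t) choose t)) * q ^ t"
    using pow_le_choose[of M t] by simp
  also have "\<dots> = fact t * (card C * ((M + t) choose t) * q ^ t)" by (simp add: mult_ac)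
  also have "\<dots> \<le> fact t * (p ^ l * p ^ (M + t))" using mn by simp
  also have "\<dots> = fact t * p ^ (n + t * (l + 1))" by (simp only: power_add[symmetric] e)
  finally have nat: "card C * M ^ t * q ^ t \<le> fact t * p ^ (n + t * (l + 1))" .
  hence R: "real (card C) * real M ^ t * real q ^ t \<le> fact t * real p ^ (n + t * (l + 1))"
    by (metis (mono_tags) of_nat_le_iff of_nat_mult of_nat_power of_nat_fact)
  have qr: "real q = real p - 1" using assms(1) by (simp add: q_def of_nat_diff)
  have "M > 0" "q > 0" using assms(1,2) by (auto simp: M_def q_def)
  hence pos: "real M ^ t * real q ^ t > 0" by simp
  have "real (card C) \<le> fact t * real p ^ (n + t * (l + 1)) / (real M ^ t * real q ^ t)"
    using R pos by (simp add: pos_le_divide_eq mult_ac)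
  thus ?thesis by (simp add: M_def qr[symmetric])
qed

end
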